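(* Every odd prism is cycle-extendable.
   Context: An odd prism is obtained from two disjoint odd cycles $w_0w_1\cdots w_{2k}w_0$ and $z_0z_1\cdots z_{2k}z_0$ ($k\ge1$) by adding the edges $w_iz_i$ for each $i\in\{0,\dots,2k\}$. A matching covered graph (connected, at least two vertices, every edge in a perfect matching) is cycle-extendable if for every even cycle $C$ the graph $G-V(C)$ has a perfect matching. *)

theory Defs
  imports Main
begin

definition simple_graph :: "'a set \<Rightarrow> 'a set set \<Rightarrow> bool" where
  "simple_graph V E \<longleftrightarrow> finite V \<and> (\<forall>e\<in>E. \<exists>u v. e = {u, v} \<and> u \<noteq> v \<and> u \<in> V \<and> v \<in> V)"

definition perfect_matching :: "'a set \<Rightarrow> 'a set set \<Rightarrow> 'a set set \<Rightarrow> bool" where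
  "perfect_matching V E M \<longleftrightarrow> M \<subseteq> E \<and> (\<forall>v\<in>V. \<exists>!e. e \<in> M \<and> v \<in> e)"

definition has_perfect_matching :: "'a set \<Rightarrow> 'a set set \<Rightarrow> bool" where
  "has_perfect_matching V E \<longleftrightarrow> (\<exists>M. perfect_matching V E M)"

definition graph_connected :: "'a set \<Rightarrow> 'a set set \<Rightarrow> bool" where
  "graph_connected V E \<longleftrightarrow>
     (\<forall>u\<in>V. \<forall>v\<in>V. (\<lambda>x y. {x, y} \<in> E)\<^sup>*\<^sup>* u v)"

definition matching_covered :: "'a set \<Rightarrow> 'a set set \<Rightarrow> bool" where
  "matching_covered V E \<longleftrightarrow> simple_graph V E \<and> graph_connected V E \<and> card V \<ge> 2 \<and>
     (\<forall>e\<in>E. \<exists>M. perfect_matching V E M \<and> e \<in> M)"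

definition is_cycle :: "'a set \<Rightarrow> 'a set set \<Rightarrow> 'a list \<Rightarrow> bool" where
  "is_cycle V E cs \<longleftrightarrow> length cs \<ge> 3 \<and> distinct cs \<and> set cs \<subseteq> V \<and>
     (\<forall>i < length cs. {cs ! i, cs ! ((i + 1) mod length cs)} \<in> E)"

definition even_cycle :: "'a set \<Rightarrow> 'a set set \<Rightarrow> 'a list \<Rightarrow> bool" where
  "even_cycle V E cs \<longleftrightarrow> is_cycle V E cs \<and> even (length cs)"

definition del_verts_E :: "'a set set \<Rightarrow> 'a set \<Rightarrow> 'a set set" where
  "del_verts_E E S = {e \<in> E. e \<inter> S = {}}"

definition cycle_extendable :: "'a set \<Rightarrow> 'a set set \<Rightarrow> bool" where
  "cycle_extendable V E \<longleftrightarrow> matching_covered V E \<and>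
     (\<forall>cs. even_cycle V E cs \<longrightarrow> has_perfect_matching (V - set cs) (del_verts_E E (set cs)))"

text \<open>The odd prism with cycles w_0..w_{2k} (vertices (False,i)) and z_0..z_{2k}
  (vertices (True,i)), plus the rungs w_i z_i.\<close>
definition prism_V :: "nat \<Rightarrow> (bool \<times> nat) set" where
  "prism_V k = UNIV \<times> {..<2*k+1}"

definition prism_E :: "nat \<Rightarrow> (bool \<times> nat) set set" where
  "prism_E k = {{(b, i), (b, (i + 1) mod (2*k+1))} | b i. i < 2*k+1}
             \<union> {{(False, i), (True, i)} | i. i < 2*k+1}"

end

theory Submission
  imports Defs
begin

lemma succ_mod: "(i::nat) < 2*k+1 \<Longrightarrow> (i+1) mod (2*k+1) = (if i = 2*k then 0 else i+1)"
  by auto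

lemma pred_mod: "(i::nat) < 2*k+1 \<Longrightarrow> (i+2*k) mod (2*k+1) = (if i = 0 then 2*k else i - 1)"
proof -
  assume a: "i < 2*k+1"
  show ?thesis
  proof (cases "i = 0")
    case False
    then have "i + 2*k = (i - 1) + (2*k+1)" by simp
    then have "(i+2*k) mod (2*k+1) = (i-1) mod (2*k+1)" by (metis mod_add_self2)
    then show ?thesis using False a by simp
  qed simp
qed

definition dd :: "nat \<Rightarrow> nat \<Rightarrow> nat \<Rightarrow> nat" where
  "dd k i j = (j + (2*k - i)) mod (2*k+1)"

lemma dd_ne: assumes "i < 2*k+1" "j < 2*k+1" "j \<noteq> i" shows "dd k i j \<noteq> 2*k"
proof (cases "i < j")
  case True
  define m where "m = j - i - 1"
  have "j + (2*k - i) = m + (2*k+1)" using assms True unfolding m_def by simp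
  then have "dd k i j = m mod (2*k+1)" unfolding dd_def by (metis mod_add_self2)
  also have "\<dots> = m" using assms unfolding m_def by simp
  finally show ?thesis using assms True unfolding m_def by simp
next
  case False
  then have "dd k i j = j + (2*k - i)" using assms unfolding dd_def by simp
  then show ?thesis using assms False by simp
qed

lemma dd_step: assumes "i < 2*k+1" "j < 2*k+1" "j \<noteq> i"
  shows "dd k i ((j+1) mod (2*k+1)) = Suc (dd k i j)"
proof -
  have "dd k i ((j+1) mod (2*k+1)) = Suc (j + (2*k - i)) mod (2*k+1)"
    unfolding dd_def by (simp add: mod_add_left_eq)
  also have "\<dots> = Suc (dd k i j)"
    using dd_ne[OF assms] unfolding dd_def by (simp add: mod_Suc)
  finally show ?thesis .
qed

lemma dd_i: "i < 2*k+1 \<Longrightarrow> dd k i i = 2*k"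
  unfolding dd_def by simp

lemma dd_i1: "i < 2*k+1 \<Longrightarrow> dd k i ((i+1) mod (2*k+1)) = 0"
proof -
  assume a: "i < 2*k+1"
  have "dd k i ((i+1) mod (2*k+1)) = (i + 1 + (2*k - i)) mod (2*k+1)"
    unfolding dd_def by (simp add: mod_add_left_eq)
  also have "i + 1 + (2*k - i) = 2*k+1" using a by simp
  finally show ?thesis by simp
qed

lemma sum_rot: "(\<Sum>j<L. (g::nat\<Rightarrow>nat) ((j+1) mod L)) = (\<Sum>j<L. g j)"
proof (cases L)
  case (Suc m)
  have "(\<Sum>j<Suc m. g ((j+1) mod Suc m)) = (\<Sum>j<m. g ((j+1) mod Suc m)) + g 0"
    by simp
  also have "(\<Sum>j<m. g ((j+1) mod Suc m)) = (\<Sum>j<m. g (Suc j))"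
    by (rule sum.cong) auto
  also have "(\<Sum>j<m. g (Suc j)) + g 0 = (\<Sum>j<Suc m. g j)"
    by (subst sum.lessThan_Suc_shift) simp
  finally show ?thesis using Suc by simp
qed simp

lemma cyc_parity:
  fixes f :: "'a \<Rightarrow> bool"
  shows "even (card {j. j < L \<and> f (xs!j) \<noteq> f (xs!((j+1) mod L))})"
proof -
  define h where "h j = (of_bool (f (xs!j)) :: nat)" for j
  have c: "card {j. j < L \<and> f (xs!j) \<noteq> f (xs!((j+1) mod L))}
      = (\<Sum>j<L. of_bool (f (xs!j) \<noteq> f (xs!((j+1) mod L))))"
    by (simp add: sum.If_cases lessThan_def Collect_conj_eq Int_commute)
  have pt: "of_bool (f (xs!j) \<noteq> f (xs!((j+1) mod L))) + 2 * of_bool (f (xs!j) \<and> f (xs!((j+1) mod L)))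
     = h j + h ((j+1) mod L)" for j
    unfolding h_def by auto
  have "(\<Sum>j<L. of_bool (f (xs!j) \<noteq> f (xs!((j+1) mod L)))) + 2 * (\<Sum>j<L. of_bool (f (xs!j) \<and> f (xs!((j+1) mod L))))
     = (\<Sum>j<L. h j) + (\<Sum>j<L. h ((j+1) mod L))"
  proof -
    have "(\<Sum>j<L. of_bool (f (xs!j) \<noteq> f (xs!((j+1) mod L))) :: nat) + 2 * (\<Sum>j<L. of_bool (f (xs!j) \<and> f (xs!((j+1) mod L))))
       = (\<Sum>j<L. of_bool (f (xs!j) \<noteq> f (xs!((j+1) mod L))) + 2 * of_bool (f (xs!j) \<and> f (xs!((j+1) mod L))))"
      by (simp only: sum.distrib sum_distrib_left)
    also have "\<dots> = (\<Sum>j<L. h j + h ((j+1) mod L))"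
      by (rule sum.cong[OF refl pt])
    also have "\<dots> = (\<Sum>j<L. h j) + (\<Sum>j<L. h ((j+1) mod L))"
      by (simp only: sum.distrib)
    finally show ?thesis .
  qed
  also have "\<dots> = 2 * (\<Sum>j<L. h j)" using sum_rot[of h L] by simp
  finally have "(\<Sum>j<L. of_bool (f (xs!j) \<noteq> f (xs!((j+1) mod L))) :: nat) = 2 * (\<Sum>j<L. h j) - 2 * (\<Sum>j<L. of_bool (f (xs!j) \<and> f (xs!((j+1) mod L))))"
    by linarith
  then show ?thesis using c by simp
qed

definition lab :: "nat \<Rightarrow> nat \<Rightarrow> bool \<times> nat \<Rightarrow> bool" where
  "lab k i x = (fst x \<noteq> odd (dd k i (snd x)))"

lemma mod_succ_lt: "(j::nat) < L \<Longrightarrow> Suc j mod L = (if Suc j = L then 0 else Suc j)"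
  by auto

lemma pred_succ: assumes "(j::nat) < 2*k+1" shows "((j+1) mod (2*k+1) + 2*k) mod (2*k+1) = j"
proof -
  have i: "(j+1) mod (2*k+1) < 2*k+1" by simp
  show ?thesis using pred_mod[OF i] succ_mod[OF assms] by auto
qed

lemma nbr:
  assumes "{(b,i),u} \<in> prism_E k" "i < 2*k+1"
  shows "u = (b,(i+1) mod (2*k+1)) \<or> u = (b,(i+2*k) mod (2*k+1)) \<or> u = (\<not>b,i)"
proof -
  from assms(1) consider
      (cyc) b' j where "j < 2*k+1" "{(b,i),u} = {(b',j),(b',(j+1) mod (2*k+1))}"
    | (rung) j where "j < 2*k+1" "{(b,i),u} = {(False,j),(True,j)}"
    unfolding prism_E_def by blast
  then show ?thesis
  proof cases
    case cyc
    then have "((b,i) = (b',j) \<and> u = (b',(j+1) mod (2*k+1))) \<or> ((b,i) = (b',(j+1) mod (2*k+1)) \<and> u = (b',j))"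
      by (simp add: doubleton_eq_iff)
    then show ?thesis
    proof
      assume h: "(b,i) = (b',(j+1) mod (2*k+1)) \<and> u = (b',j)"
      have "j = (i + 2*k) mod (2*k+1)"
        using h pred_succ[OF cyc(1)] by auto
      then show ?thesis using h by auto
    qed auto
  next
    case rung
    then show ?thesis by (cases b) (auto simp: doubleton_eq_iff)
  qed
qed

lemma lab_diff:
  assumes "e \<in> prism_E k" "i < 2*k+1"
    "e \<noteq> {(False,i),(False,(i+1) mod (2*k+1))}" "e \<noteq> {(True,i),(True,(i+1) mod (2*k+1))}"
    "x \<in> e" "y \<in> e" "x \<noteq> y"
  shows "lab k i x \<noteq> lab k i y"
proof -
  from assms(1) consider
      (cyc) b' j where "j < 2*k+1" "e = {(b',j),(b',(j+1) mod (2*k+1))}"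
    | (rung) j where "j < 2*k+1" "e = {(False,j),(True,j)}"
    unfolding prism_E_def by blast
  then show ?thesis
  proof cases
    case cyc
    have "j \<noteq> i" using cyc assms(3,4) by (cases b') auto
    then have st: "dd k i ((j+1) mod (2*k+1)) = Suc (dd k i j)"
      using dd_step assms(2) cyc(1) by blast
    have "{x,y} = e" using assms(5-7) cyc(2) by auto
    then show ?thesis using st cyc(2) unfolding lab_def by (auto simp: doubleton_eq_iff)
  next
    case rung
    then show ?thesis using assms(5-7) unfolding lab_def by auto
  qed
qed

lemma ed_inj:
  assumes "distinct cs" "length cs \<ge> 3" "j1 < length cs" "j2 < length cs"
    "{cs!j1, cs!((j1+1) mod length cs)} = {cs!j2, cs!((j2+1) mod length cs)}"
  shows "j1 = j2"
proof -
  let ?L = "length cs"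
  have "(cs!j1 = cs!j2 \<and> cs!((j1+1) mod ?L) = cs!((j2+1) mod ?L)) \<or>
        (cs!j1 = cs!((j2+1) mod ?L) \<and> cs!((j1+1) mod ?L) = cs!j2)"
    using assms(5) by (simp add: doubleton_eq_iff)
  then show ?thesis
  proof
    assume "cs!j1 = cs!j2 \<and> cs!((j1+1) mod ?L) = cs!((j2+1) mod ?L)"
    then show ?thesis using assms by (simp add: nth_eq_iff_index_eq)
  next
    assume h: "cs!j1 = cs!((j2+1) mod ?L) \<and> cs!((j1+1) mod ?L) = cs!j2"
    have p: "0 < ?L" using assms(2) by linarith
    have b1: "(j2+1) mod ?L < ?L" "(j1+1) mod ?L < ?L" using p by simp_all
    have "j1 = (j2+1) mod ?L" using h assms(1,3) b1(1) nth_eq_iff_index_eq by metis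
    moreover have "(j1+1) mod ?L = j2" using h assms(1,4) b1(2) nth_eq_iff_index_eq by metis
    ultimately have "j1 = (j2+1) mod ?L" "(j1+1) mod ?L = j2" by auto
    then have h1: "j1 = (j2+1) mod ?L" and h2: "(j1+1) mod ?L = j2" by auto
    show ?thesis
    proof (cases "j2 + 1 = ?L")
      case True
      then have "j1 = 0" using h1 by simp
      then have "j2 = 1" using h2 assms(2) by simp
      then show ?thesis using True assms(2) by simp
    next
      case False
      then have "j1 = j2 + 1" using h1 assms(4) by simp
      then have "(j2 + 2) mod ?L = j2" using h2 by simp
      show ?thesis
      proof (cases "j2 + 2 < ?L")
        case True
        then show ?thesis using \<open>(j2 + 2) mod ?L = j2\<close> by simp
      next
        case F2: False
        then have "j2 + 2 = ?L" using False assms(4) by linarith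
        then show ?thesis using \<open>(j2 + 2) mod ?L = j2\<close> assms(2) by simp
      qed
    qed
  qed
qed

lemma key:
  assumes k1: "k \<ge> 1" and ec: "even_cycle (prism_V k) (prism_E k) cs" and bi: "(b,i) \<in> set cs"
  shows "(\<not>b,i) \<in> set cs"
proof (rule ccontr)
  assume nb: "(\<not>b,i) \<notin> set cs"
  define L where "L = length cs"
  define n where "n = 2*k+1"
  have L3: "L \<ge> 3" and dist: "distinct cs" and sub: "set cs \<subseteq> prism_V k"
    and edg: "\<And>j. j < L \<Longrightarrow> {cs!j, cs!((j+1) mod L)} \<in> prism_E k" and evL: "even L"
    using ec unfolding even_cycle_def is_cycle_def L_def by auto
  have iN: "i < n" using bi sub unfolding prism_V_def n_def by auto
  obtain p where p: "p < L" "cs!p = (b,i)" using bi unfolding L_def by (metis in_set_conv_nth)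
  define pr where "pr = (p + L - 1) mod L"
  have prL: "pr < L" using L3 unfolding pr_def by simp
  have prs: "(pr + 1) mod L = p"
  proof (cases "p = 0")
    case True
    then have "pr = L - 1" using L3 unfolding pr_def by simp
    then show ?thesis using True L3 by simp
  next
    case False
    then have "p + L - 1 = (p - 1) + L" using L3 by simp
    then have "pr = (p - 1 + L) mod L" unfolding pr_def by simp
    also have "\<dots> = (p - 1) mod L" by (rule mod_add_self2)
    also have "\<dots> = p - 1" using p(1) by simp
    finally have "pr = p - 1" .
    then show ?thesis using False p(1) by simp
  qed
  define u where "u = cs!((p+1) mod L)"
  define w where "w = cs!pr"
  have s1: "(p+1) mod L < L" using L3 by simp
  have idx: "(p+1) mod L \<noteq> pr" "(p+1) mod L \<noteq> p" "pr \<noteq> p"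
  proof -
    show "(p+1) mod L \<noteq> pr"
    proof (cases "p = 0")
      case True then have "pr = L - 1" using L3 unfolding pr_def by simp
      then show ?thesis using True L3 by simp
    next
      case False
      have "p + L - 1 = (p - 1) + L" using L3 False by simp
      then have "pr = (p - 1 + L) mod L" unfolding pr_def by simp
      also have "\<dots> = (p - 1) mod L" by (rule mod_add_self2)
      also have "\<dots> = p - 1" using p(1) by simp
      finally have "pr = p - 1" .
      then show ?thesis using False p(1) L3 by (auto simp: mod_if)
    qed
    show "(p+1) mod L \<noteq> p" using p(1) L3 by (auto simp: mod_if)
    have "(p+1) mod L \<noteq> p" using p(1) L3 by (auto simp: mod_if)
    then show "pr \<noteq> p" using prs by auto
  qed
  have uw: "u \<noteq> w" using idx(1) s1 prL dist unfolding u_def w_def L_def by (simp add: nth_eq_iff_index_eq)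
  have ub: "u \<noteq> (b,i)" using idx(2) s1 p dist unfolding u_def L_def by (metis nth_eq_iff_index_eq)
  have wb: "w \<noteq> (b,i)" using idx(3) prL p dist unfolding w_def L_def by (metis nth_eq_iff_index_eq)
  have uin: "u \<in> set cs" using s1 unfolding u_def L_def by simp
  have win: "w \<in> set cs" using prL unfolding w_def L_def by simp
  have eu: "{(b,i),u} \<in> prism_E k" using edg[OF p(1)] p(2) unfolding u_def by simp
  have ew: "{(b,i),w} \<in> prism_E k" using edg[OF prL] prs p(2) unfolding w_def by (simp add: insert_commute)
  have un: "u = (b,(i+1) mod n) \<or> u = (b,(i+2*k) mod n)"
    using nbr[OF eu] iN uin nb unfolding n_def by auto
  have wn: "w = (b,(i+1) mod n) \<or> w = (b,(i+2*k) mod n)"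
    using nbr[OF ew] iN win nb unfolding n_def by auto
  define eb where "eb = {(b,i),(b,(i+1) mod n)}"
  define ed where "ed j = {cs!j, cs!((j+1) mod L)}" for j
  obtain q where q: "q < L" "ed q = eb"
  proof -
    have "u = (b,(i+1) mod n) \<or> w = (b,(i+1) mod n)" using un wn uw by auto
    then show ?thesis
    proof
      assume "u = (b,(i+1) mod n)"
      then have "ed p = eb" unfolding ed_def eb_def u_def using p(2) by simp
      then show ?thesis using that p(1) by blast
    next
      assume "w = (b,(i+1) mod n)"
      then have "ed pr = eb" unfolding ed_def eb_def w_def using p(2) prs by (simp add: insert_commute)
      then show ?thesis using that prL by blast
    qed
  qed
  define S where "S = {j. j < L \<and> lab k i (cs!j) = lab k i (cs!((j+1) mod L))}"
  define D where "D = {j. j < L \<and> lab k i (cs!j) \<noteq> lab k i (cs!((j+1) mod L))}"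
  have evD: "even (card D)" unfolding D_def by (rule cyc_parity)
  have "S \<union> D = {..<L}" "S \<inter> D = {}" unfolding S_def D_def by auto
  then have "card S + card D = L"
    by (metis card_Un_disjoint card_lessThan finite_Un finite_lessThan)
  then have evS: "even (card S)" using evL evD by auto
  have nxt: "j < L \<Longrightarrow> cs!j \<noteq> cs!((j+1) mod L)" for j
  proof -
    assume j: "j < L"
    have "(j+1) mod L \<noteq> j" using j L3 by (auto simp: mod_if)
    moreover have "(j+1) mod L < L" using L3 by simp
    ultimately show ?thesis using j dist unfolding L_def by (simp add: nth_eq_iff_index_eq)
  qed
  have dd0: "dd k i ((i+1) mod n) = 0" "dd k i i = 2*k" using dd_i1 dd_i iN unfolding n_def by auto
  have qS: "q \<in> S"
  proof -
    have "cs!q \<in> eb" "cs!((q+1) mod L) \<in> eb" using q unfolding ed_def by auto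
    then show ?thesis using q(1) dd0 unfolding S_def eb_def lab_def by auto
  qed
  have Sq: "S \<subseteq> {q}"
  proof
    fix j assume jS: "j \<in> S"
    then have j: "j < L" and lj: "lab k i (cs!j) = lab k i (cs!((j+1) mod L))" unfolding S_def by auto
    have "ed j = {(False,i),(False,(i+1) mod n)} \<or> ed j = {(True,i),(True,(i+1) mod n)}"
    proof (rule ccontr)
      assume a: "\<not> (ed j = {(False,i),(False,(i+1) mod n)} \<or> ed j = {(True,i),(True,(i+1) mod n)})"
      have "lab k i (cs!j) \<noteq> lab k i (cs!((j+1) mod L))"
        apply (rule lab_diff[OF edg[OF j]])
        using iN a nxt[OF j] unfolding ed_def n_def by simp_all
      then show False using lj by simp
    qed
    moreover have "ed j \<noteq> {(\<not>b,i),(\<not>b,(i+1) mod n)}"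
    proof
      assume "ed j = {(\<not>b,i),(\<not>b,(i+1) mod n)}"
      then have "(\<not>b,i) \<in> ed j" by simp
      moreover have "(j+1) mod L < L" using L3 by simp
      ultimately show False using nb j nth_mem[of "(j+1) mod L" cs] nth_mem[of j cs] unfolding ed_def L_def by auto
    qed
    ultimately have "ed j = eb" unfolding eb_def by (cases b) auto
    then have "ed j = ed q" using q by simp
    then have "j = q" using ed_inj[OF dist _ _ _] L3 j q(1) unfolding ed_def L_def by blast
    then show "j \<in> {q}" by simp
  qed
  have "S = {q}" using Sq qS by auto
  then show False using evS by simp
qed

lemma rung_in: "j < 2*k+1 \<Longrightarrow> {(False,j),(True,j)} \<in> prism_E k"
  unfolding prism_E_def by blast

lemma cyc_in: "j < 2*k+1 \<Longrightarrow> {(b,j),(b,(j+1) mod (2*k+1))} \<in> prism_E k"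
  unfolding prism_E_def by blast

lemma succ_ne: assumes "k \<ge> 1" "(i::nat) < 2*k+1" shows "(i+1) mod (2*k+1) \<noteq> i"
proof (cases "i = 2*k")
  case True then show ?thesis using assms by simp
next
  case False then have "i + 1 < 2*k+1" using assms by simp
  then show ?thesis by simp
qed

lemma simple: "k \<ge> 1 \<Longrightarrow> simple_graph (prism_V k) (prism_E k)"
  unfolding simple_graph_def
proof (intro conjI ballI)
  show "finite (prism_V k)" unfolding prism_V_def by simp
  fix e assume k: "k \<ge> 1" and e: "e \<in> prism_E k"
  from e consider
      (cyc) b j where "j < 2*k+1" "e = {(b,j),(b,(j+1) mod (2*k+1))}"
    | (rung) j where "j < 2*k+1" "e = {(False,j),(True,j)}"
    unfolding prism_E_def by blast
  then show "\<exists>u v. e = {u, v} \<and> u \<noteq> v \<and> u \<in> prism_V k \<and> v \<in> prism_V k"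
  proof cases
    case cyc
    have "(b,j) \<noteq> (b,(j+1) mod (2*k+1))" using succ_ne[OF k cyc(1)] by simp
    moreover have "(b,j) \<in> prism_V k" "(b,(j+1) mod (2*k+1)) \<in> prism_V k"
      using cyc(1) unfolding prism_V_def by auto
    ultimately show ?thesis using cyc(2) by blast
  next
    case rung
    then show ?thesis unfolding prism_V_def by auto
  qed
qed

lemma reach:
  assumes "i < 2*k+1"
  shows "(\<lambda>x y. {x, y} \<in> prism_E k)\<^sup>*\<^sup>* (b,i) (False,0) \<and> (\<lambda>x y. {x, y} \<in> prism_E k)\<^sup>*\<^sup>* (False,0) (b,i)"
  using assms
proof (induction i)
  case 0
  have r: "{(False,0),(True,0)} \<in> prism_E k" by (rule rung_in) simp
  then have r': "{(True,0),(False,0)} \<in> prism_E k" by (simp add: insert_commute)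
  show ?case
  proof (cases b)
    case True
    then show ?thesis using r r' by auto
  qed simp
next
  case (Suc i)
  then have e: "{(b,i),(b,Suc i)} \<in> prism_E k" using cyc_in[of i k b] by simp
  then have e': "{(b,Suc i),(b,i)} \<in> prism_E k" by (simp add: insert_commute)
  have ih: "(\<lambda>x y. {x, y} \<in> prism_E k)\<^sup>*\<^sup>* (b,i) (False,0) \<and> (\<lambda>x y. {x, y} \<in> prism_E k)\<^sup>*\<^sup>* (False,0) (b,i)"
    using Suc by simp
  show ?case
    using ih e e' by (meson converse_rtranclp_into_rtranclp rtranclp.rtrancl_into_rtrancl)
qed

lemma connected: "graph_connected (prism_V k) (prism_E k)"
  unfolding graph_connected_def
proof (intro ballI)
  fix u v assume "u \<in> prism_V k" "v \<in> prism_V k"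
  then obtain b i c j where "u = (b,i)" "v = (c,j)" "i < 2*k+1" "j < 2*k+1"
    unfolding prism_V_def by auto
  then show "(\<lambda>x y. {x, y} \<in> prism_E k)\<^sup>*\<^sup>* u v"
    using reach[of i k b] reach[of j k c] by (meson rtranclp_trans)
qed

lemma cardV: "card (prism_V k) \<ge> 2"
  unfolding prism_V_def by (simp add: card_cartesian_product)

definition rungs :: "nat \<Rightarrow> (nat \<Rightarrow> bool) \<Rightarrow> (bool \<times> nat) set set" where
  "rungs k P = {{(False,j),(True,j)} | j. j < 2*k+1 \<and> P j}"

lemma pm_rungs: "perfect_matching (prism_V k) (prism_E k) (rungs k (\<lambda>_. True))"
  unfolding perfect_matching_def rungs_def prism_V_def
  by (auto simp: prism_E_def)

lemma pm_cyc:
  assumes "k \<ge> 1" "i < 2*k+1"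
  defines "s \<equiv> (i+1) mod (2*k+1)"
  shows "perfect_matching (prism_V k) (prism_E k)
     ({{(False,i),(False,s)}, {(True,i),(True,s)}} \<union> rungs k (\<lambda>j. j \<noteq> i \<and> j \<noteq> s))"
proof -
  have si: "s \<noteq> i" "s < 2*k+1" using succ_ne[OF assms(1,2)] unfolding s_def by auto
  have sub: "{{(False,i),(False,s)}, {(True,i),(True,s)}} \<union> rungs k (\<lambda>j. j \<noteq> i \<and> j \<noteq> s) \<subseteq> prism_E k"
    using cyc_in[OF assms(2)] rung_in unfolding rungs_def s_def by blast
  show ?thesis
    unfolding perfect_matching_def
  proof (intro conjI sub ballI)
    fix v assume "v \<in> prism_V k"
    then obtain b j where v: "v = (b,j)" "j < 2*k+1" unfolding prism_V_def by auto
    show "\<exists>!e. e \<in> {{(False,i),(False,s)}, {(True,i),(True,s)}} \<union> rungs k (\<lambda>j. j \<noteq> i \<and> j \<noteq> s) \<and> v \<in> e"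
    proof (cases "j = i \<or> j = s")
      case True
      then show ?thesis
      proof
        assume "j = i"
        then show ?thesis using si v unfolding rungs_def
          by (cases b) (auto intro!: ex1I[of _ "{(b,i),(b,s)}"])
      next
        assume "j = s"
        then show ?thesis using si v unfolding rungs_def
          by (cases b) (auto intro!: ex1I[of _ "{(b,i),(b,s)}"])
      qed
    next
      case False
      then show ?thesis using si v unfolding rungs_def
        by (intro ex1I[of _ "{(False,j),(True,j)}"]) auto
    qed
  qed
qed

lemma matching_covered: "k \<ge> 1 \<Longrightarrow> matching_covered (prism_V k) (prism_E k)"
  unfolding matching_covered_def
proof (intro conjI simple connected cardV ballI)
  fix e assume k: "k \<ge> 1" and e: "e \<in> prism_E k"
  from e consider
      (cyc) b j where "j < 2*k+1" "e = {(b,j),(b,(j+1) mod (2*k+1))}"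
    | (rung) j where "j < 2*k+1" "e = {(False,j),(True,j)}"
    unfolding prism_E_def by blast
  then show "\<exists>M. perfect_matching (prism_V k) (prism_E k) M \<and> e \<in> M"
  proof cases
    case cyc
    then show ?thesis using pm_cyc[OF k cyc(1)] by (cases b) blast+
  next
    case rung
    then show ?thesis using pm_rungs unfolding rungs_def by blast
  qed
qed

theorem proposition4p3:
  fixes k :: nat
  assumes "k \<ge> 1"
  shows "cycle_extendable (prism_V k) (prism_E k)"
  unfolding cycle_extendable_def
proof (intro conjI matching_covered[OF assms] allI impI)
  fix cs assume ec: "even_cycle (prism_V k) (prism_E k) cs"
  have kk: "\<And>b i. (b,i) \<in> set cs \<Longrightarrow> (\<not>b,i) \<in> set cs" using key[OF assms ec] by blast
  define M where "M = rungs k (\<lambda>j. (False,j) \<notin> set cs)"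
  have "perfect_matching (prism_V k - set cs) (del_verts_E (prism_E k) (set cs)) M"
    unfolding perfect_matching_def
  proof (intro conjI ballI)
    show "M \<subseteq> del_verts_E (prism_E k) (set cs)"
      unfolding M_def rungs_def del_verts_E_def using rung_in kk by fastforce
  next
    fix v assume "v \<in> prism_V k - set cs"
    then obtain b j where v: "v = (b,j)" "j < 2*k+1" "(b,j) \<notin> set cs" unfolding prism_V_def by auto
    have "(False,j) \<notin> set cs" using v(3) kk[of False j] by (cases b) auto
    then show "\<exists>!e. e \<in> M \<and> v \<in> e" using v unfolding M_def rungs_def
      by (intro ex1I[of _ "{(False,j),(True,j)}"]) auto
  qed
  then show "has_perfect_matching (prism_V k - set cs) (del_verts_E (prism_E k) (set cs))"
    unfolding has_perfect_matching_def by blast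
qed

end
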